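(* Let $\ell\ge 2$ and let $G$ be a pendant graph with $m$ edges and $n$ vertices. Then $\overline{G}$ is $N$-AW if and only if $\gcd(2(n-m)-1,\ell)=1$. Equivalently, if $G$ is a graph of even order $n$ and size $\binom{n}{2}-\left(\frac{n}{2}+k\right)$ such that $\overline{G}$ is a pendant graph, then $G$ is $N$-AW if and only if $\gcd(n-2k-1,\ell)=1$.
   Context: All graphs are finite and simple; $\overline{G}$ is the complement. For a graph $H$, $H\odot K_1$ is obtained from $H$ by adding, for each vertex $u$ of $H$, a new vertex adjacent only to $u$; a pendant graph is a graph of this form. Labels lie in $\mathbb{Z}_\ell$. In the neighborhood Lights Out game, toggling a vertex $w$ adds $1$ (mod $\ell$) to the label of each vertex of the closed neighborhood $N[w]$; the game is won when all labels are $0$; a graph is $N$-AW if every initial labeling can be won. *)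

theory Defs
  imports Main
begin

definition is_graph :: "'a set \<Rightarrow> ('a \<Rightarrow> 'a \<Rightarrow> bool) \<Rightarrow> bool" where
  "is_graph V E \<longleftrightarrow> finite V \<and> (\<forall>u v. E u v \<longrightarrow> u \<in> V \<and> v \<in> V)
     \<and> (\<forall>u v. E u v \<longrightarrow> E v u) \<and> (\<forall>u. \<not> E u u)"

definition num_edges :: "'a set \<Rightarrow> ('a \<Rightarrow> 'a \<Rightarrow> bool) \<Rightarrow> nat" where
  "num_edges V E = card {{u, v} | u v. u \<in> V \<and> v \<in> V \<and> E u v}"

definition compl_graph :: "'a set \<Rightarrow> ('a \<Rightarrow> 'a \<Rightarrow> bool) \<Rightarrow> ('a \<Rightarrow> 'a \<Rightarrow> bool)" where
  "compl_graph V E = (\<lambda>u v. u \<in> V \<and> v \<in> V \<and> u \<noteq> v \<and> \<not> E u v)"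

text \<open>G is (isomorphic to) H \<odot> K1: there is a core C (the copy of H) and a bijection p from C
  onto the remaining vertices such that every vertex outside C is adjacent exactly to its
  partner p^{-1}; edges inside C are those of H (arbitrary).\<close>
definition is_pendant :: "'a set \<Rightarrow> ('a \<Rightarrow> 'a \<Rightarrow> bool) \<Rightarrow> bool" where
  "is_pendant V E \<longleftrightarrow> (\<exists>C p. C \<subseteq> V \<and> bij_betw p C (V - C) \<and>
      (\<forall>u \<in> V - C. \<forall>v. E u v \<longleftrightarrow> (v \<in> C \<and> u = p v)))"

text \<open>Neighborhood Lights Out over Z_l: every initial labeling a can be brought to all zeros;
  t w is the number of times vertex w is toggled; toggling w adds 1 to each vertex of N[w].\<close>
definition N_AW :: "nat \<Rightarrow> 'a set \<Rightarrow> ('a \<Rightarrow> 'a \<Rightarrow> bool) \<Rightarrow> bool" where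
  "N_AW l V E \<longleftrightarrow> (\<forall>a :: 'a \<Rightarrow> int. \<exists>t :: 'a \<Rightarrow> nat. \<forall>v \<in> V.
      (a v + (\<Sum>w \<in> {w \<in> V. w = v \<or> E w v}. int (t w))) mod int l = 0)"

end

theory Submission
  imports Defs
begin

lemma handshake:
  assumes g: "is_graph V E"
  shows "(\<Sum>v\<in>V. card {w\<in>V. E w v}) = 2 * num_edges V E"
proof -
  have fin: "finite V" and sym: "\<And>u v. E u v \<Longrightarrow> E v u" and irr: "\<And>u. \<not> E u u"
    and inV: "\<And>u v. E u v \<Longrightarrow> u \<in> V \<and> v \<in> V"
    using g unfolding is_graph_def by auto
  define P where "P = Sigma V (\<lambda>v. {w\<in>V. E w v})"
  define Ed where "Ed = {{u, v} | u v. u \<in> V \<and> v \<in> V \<and> E u v}"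
  define f where "f = (\<lambda>x::'a\<times>'a. {fst x, snd x})"
  have finP: "finite P" unfolding P_def using fin by auto
  have cardP: "card P = (\<Sum>v\<in>V. card {w\<in>V. E w v})"
    unfolding P_def using fin by (subst card_SigmaI) auto
  have img: "f ` P \<subseteq> Ed"
  proof
    fix e assume "e \<in> f ` P"
    then obtain v w where e: "e = {v,w}" "v\<in>V" "w\<in>V" "E w v" unfolding P_def f_def by auto
    then have "e = {w,v}" by (simp add: insert_commute)
    then show "e \<in> Ed" unfolding Ed_def using e by blast
  qed
  have finEd: "finite Ed"
  proof (rule finite_subset[of _ "Pow V"])
    show "Ed \<subseteq> Pow V" unfolding Ed_def by auto
  qed (use fin in auto)
  have grp: "(\<Sum>e\<in>Ed. card {x\<in>P. f x = e}) = card P"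
    using sum.group[of P Ed f "\<lambda>_. 1::nat"] finP finEd img by simp
  have fib: "card {x\<in>P. f x = e} = 2" if eE: "e \<in> Ed" for e
  proof -
    obtain u v where e: "e = {u,v}" "u\<in>V" "v\<in>V" "E u v" using eE unfolding Ed_def by blast
    have "u \<noteq> v" using irr e by auto
    have "{x\<in>P. f x = e} = {(u,v),(v,u)}"
      using e sym unfolding P_def f_def by (auto simp: doubleton_eq_iff)
    then show ?thesis using \<open>u\<noteq>v\<close> by simp
  qed
  then have "(\<Sum>e\<in>Ed. card {x\<in>P. f x = e}) = 2 * card Ed" by simp
  then show ?thesis using grp cardP unfolding num_edges_def Ed_def by simp
qed

lemma edges_compl:
  assumes g: "is_graph V E"
  shows "num_edges V E + num_edges V (compl_graph V E) = card V choose 2"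
proof -
  have fin: "finite V" and sym: "\<And>u v. E u v \<Longrightarrow> E v u" and irr: "\<And>u. \<not> E u u"
    and inV: "\<And>u v. E u v \<Longrightarrow> u \<in> V \<and> v \<in> V"
    using g unfolding is_graph_def by auto
  define E1 where "E1 = {{u, v} | u v. u \<in> V \<and> v \<in> V \<and> E u v}"
  define E2 where "E2 = {{u, v} | u v. u \<in> V \<and> v \<in> V \<and> compl_graph V E u v}"
  have un: "E1 \<union> E2 = {B. B \<subseteq> V \<and> card B = 2}"
  proof
    show "E1 \<union> E2 \<subseteq> {B. B \<subseteq> V \<and> card B = 2}"
    proof
      fix B assume "B \<in> E1 \<union> E2"
      then obtain u v where "B = {u,v}" "u \<in> V" "v \<in> V" "u \<noteq> v"
        unfolding E1_def E2_def compl_graph_def using irr by blast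
      then show "B \<in> {B. B \<subseteq> V \<and> card B = 2}" by auto
    qed
    show "{B. B \<subseteq> V \<and> card B = 2} \<subseteq> E1 \<union> E2"
    proof
      fix B assume "B \<in> {B. B \<subseteq> V \<and> card B = 2}"
      then obtain x y where "B = {x,y}" "x \<noteq> y" "x \<in> V" "y \<in> V" by (auto simp: card_2_iff)
      then show "B \<in> E1 \<union> E2" unfolding E1_def E2_def compl_graph_def by blast
    qed
  qed
  have dis: "E1 \<inter> E2 = {}"
  proof (rule ccontr)
    assume "E1 \<inter> E2 \<noteq> {}"
    then obtain u v x y where "{u,v} = {x,y}" "E u v" "\<not> E x y"
      unfolding E1_def E2_def compl_graph_def by blast
    then show False using sym by (auto simp: doubleton_eq_iff)
  qed
  have finU: "finite (E1 \<union> E2)" unfolding un using fin by simp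
  have "card (E1 \<union> E2) = card E1 + card E2"
    using finU dis by (intro card_Un_disjoint) auto
  moreover have "card (E1 \<union> E2) = card V choose 2" unfolding un using n_subsets[OF fin] by simp
  ultimately show ?thesis unfolding num_edges_def E1_def E2_def by simp
qed

lemma compl_compl:
  assumes g: "is_graph V E"
  shows "compl_graph V (compl_graph V E) = E"
  using g unfolding is_graph_def compl_graph_def by (auto intro!: ext)

lemma compl_is_graph:
  assumes g: "is_graph V E"
  shows "is_graph V (compl_graph V E)"
  using g unfolding is_graph_def compl_graph_def by auto

lemma part1:
  fixes V :: "'a set" and E :: "'a \<Rightarrow> 'a \<Rightarrow> bool" and l :: nat and C :: "'a set" and p
  assumes g: "is_graph V E" and l: "l > 0" and CV: "C \<subseteq> V" and bij: "bij_betw p C (V - C)"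
    and pend: "\<forall>u\<in>V - C. \<forall>v. E u v \<longleftrightarrow> (v \<in> C \<and> u = p v)"
  shows "N_AW l V (compl_graph V E) \<longleftrightarrow>
         gcd (2 * (int (card V) - int (num_edges V E)) - 1) (int l) = 1"
proof -
  have fin: "finite V" and sym: "\<And>u v. E u v \<Longrightarrow> E v u" and irr: "\<And>u. \<not> E u u"
    and inV: "\<And>u v. E u v \<Longrightarrow> u \<in> V \<and> v \<in> V"
    using g unfolding is_graph_def by auto
  have finC: "finite C" using fin CV finite_subset by blast
  have pP: "p u \<in> V \<and> p u \<notin> C" if "u \<in> C" for u using bij that bij_betwE by blast
  have inj: "inj_on p C" using bij_betw_imp_inj_on[OF bij] .
  have surj: "p ` C = V - C" using bij_betw_imp_surj_on[OF bij] .
  have Epu: "E (p u) w \<longleftrightarrow> w = u" if "u \<in> C" for u w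
  proof -
    have "E (p u) w \<longleftrightarrow> (w \<in> C \<and> p u = p w)" using pend pP[OF that] CV by auto
    also have "\<dots> \<longleftrightarrow> w = u" using inj that unfolding inj_on_def by blast
    finally show ?thesis .
  qed
  have Ewpu: "E w (p u) \<longleftrightarrow> w = u" if "u \<in> C" for u w using Epu[OF that] sym by blast
  define N where "N u = {w\<in>C. E w u}" for u
  have finN: "finite (N u)" for u using finC N_def by auto
  have NC: "N u \<subseteq> C" for u using N_def by auto
  define S where "S v = {w\<in>V. w = v \<or> compl_graph V E w v}" for v
  have S_eq: "S v = V - {w\<in>V. E w v}" if "v\<in>V" for v
    using that irr unfolding S_def compl_graph_def by auto
  define T where "T ti = (\<Sum>w\<in>V. ti w)" for ti :: "'a \<Rightarrow> int"
  have sumV: "(\<Sum>w\<in>V. f w) = (\<Sum>w\<in>C. f w) + (\<Sum>w\<in>C. f (p w))" for f :: "'a \<Rightarrow> int"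
  proof -
    have "(\<Sum>w\<in>V. f w) = (\<Sum>w\<in>V-C. f w) + (\<Sum>w\<in>C. f w)"
      by (rule sum.subset_diff[OF CV fin])
    moreover have "(\<Sum>w\<in>C. f (p w)) = (\<Sum>w\<in>V-C. f w)"
      by (rule sum.reindex_bij_betw[OF bij])
    ultimately show ?thesis by simp
  qed
  have Tform: "T ti = (\<Sum>u\<in>C. ti u) + (\<Sum>u\<in>C. ti (p u))" for ti
    using sumV T_def by simp
  have Fp: "(\<Sum>w\<in>S (p u). ti w) = T ti - ti u" if "u\<in>C" for u ti
  proof -
    have "{w\<in>V. E w (p u)} = {u}" using Ewpu that CV by auto
    then have "S (p u) = V - {u}" using S_eq pP that by auto
    then show ?thesis using fin that CV T_def by (simp add: sum_diff1 subsetD)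
  qed
  have Fu: "(\<Sum>w\<in>S u. ti w) = T ti - ti (p u) - (\<Sum>w\<in>N u. ti w)" if "u\<in>C" for u ti
  proof -
    have e: "{w\<in>V. E w u} = insert (p u) (N u)"
    proof (intro set_eqI iffI)
      fix w assume w: "w \<in> {w\<in>V. E w u}"
      show "w \<in> insert (p u) (N u)"
      proof (cases "w \<in> C")
        case True then show ?thesis using w N_def by auto
      next
        case False then have "w \<in> V - C" using w by auto
        then show ?thesis using pend w by auto
      qed
    next
      fix w assume "w \<in> insert (p u) (N u)"
      then show "w \<in> {w\<in>V. E w u}" using Epu[OF that] pP[OF that] N_def CV inV by auto
    qed
    have nin: "p u \<notin> N u" using pP that N_def by auto
    have sub: "{w\<in>V. E w u} \<subseteq> V" by auto
    have Su: "S u = V - {w\<in>V. E w u}" using S_eq[of u] that CV by auto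
    have "(\<Sum>w\<in>S u. ti w) = T ti - (\<Sum>w\<in>{w\<in>V. E w u}. ti w)"
      unfolding Su T_def by (rule sum_diff[OF fin sub])
    also have "\<dots> = T ti - ti (p u) - (\<Sum>w\<in>N u. ti w)"
      unfolding e using nin finN by simp
    finally show ?thesis .
  qed
  define c where "c = card C"
  have cardV: "card V = 2 * c"
  proof -
    have "card V = card (V - C) + card C" using fin CV by (metis card_Diff_subset finite_subset card_mono le_add_diff_inverse2)
    moreover have "card (V - C) = card C" using bij_betw_same_card[OF bij] by simp
    ultimately show ?thesis using c_def by simp
  qed
  define d where "d u = int (card (N u))" for u
  have sumd: "(\<Sum>u\<in>C. d u) = 2 * int (num_edges V E) - 2 * int c"
  proof -
    have "int (2 * num_edges V E) = (\<Sum>v\<in>V. int (card {w\<in>V. E w v}))"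
      using handshake[OF g] by (metis of_nat_sum)
    also have "\<dots> = (\<Sum>u\<in>C. int (card {w\<in>V. E w u})) + (\<Sum>u\<in>C. int (card {w\<in>V. E w (p u)}))"
      by (rule sumV)
    also have "(\<Sum>u\<in>C. int (card {w\<in>V. E w u})) = (\<Sum>u\<in>C. d u + 1)"
    proof (rule sum.cong)
      fix u assume u: "u \<in> C"
      have "{w\<in>V. E w u} = insert (p u) (N u)"
      proof (intro set_eqI iffI)
        fix w assume w: "w \<in> {w\<in>V. E w u}"
        show "w \<in> insert (p u) (N u)"
        proof (cases "w \<in> C")
          case True then show ?thesis using w N_def by auto
        next
          case False then have "w \<in> V - C" using w by auto
          then show ?thesis using pend w by auto
        qed
      next
        fix w assume "w \<in> insert (p u) (N u)"
        then show "w \<in> {w\<in>V. E w u}" using Epu[OF u] pP[OF u] N_def CV inV by auto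
      qed
      moreover have "p u \<notin> N u" using pP u N_def by auto
      ultimately show "int (card {w\<in>V. E w u}) = d u + 1" using finN d_def by simp
    qed simp
    also have "(\<Sum>u\<in>C. int (card {w\<in>V. E w (p u)})) = (\<Sum>u\<in>C. 1)"
    proof (rule sum.cong)
      fix u assume u: "u \<in> C"
      have "{w\<in>V. E w (p u)} = {u}" using Ewpu u CV by auto
      then show "int (card {w\<in>V. E w (p u)}) = 1" by simp
    qed simp
    finally have "int (2 * num_edges V E) = (\<Sum>u\<in>C. d u + 1) + (\<Sum>u\<in>C. 1)" .
    then show ?thesis using c_def by (simp add: sum.distrib)
  qed
  define D where "D = 2 * (int (card V) - int (num_edges V E)) - 1"
  have D_eq: "D = 2 * int c - (\<Sum>u\<in>C. d u) - 1" using cardV sumd D_def by simp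
  have sumN: "(\<Sum>w\<in>N u. (X::int) - f w) = d u * X - (\<Sum>w\<in>N u. f w)" for u X f
    using finN d_def by (simp add: sum_subtractf)
  show ?thesis unfolding D_def[symmetric]
  proof
    assume aw: "N_AW l V (compl_graph V E)"
    show "gcd D (int l) = 1"
    proof (cases "C = {}")
      case True
      then show ?thesis using D_eq c_def by simp
    next
      case False
      then obtain u0 where u0: "u0 \<in> C" by blast
      define a where "a v = (if v = u0 then 1 else 0::int)" for v
      from aw obtain t where ht: "\<forall>v\<in>V. (a v + (\<Sum>w\<in>S v. int (t w))) mod int l = 0"
        unfolding N_AW_def S_def by blast
      define ti where "ti w = int (t w)" for w
      define q where "q v = (a v + (\<Sum>w\<in>S v. ti w)) div int l" for v
      have hq: "a v + (\<Sum>w\<in>S v. ti w) = int l * q v" if "v \<in> V" for v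
        using ht that unfolding q_def ti_def by (metis dvd_mult_div_cancel mod_0_imp_dvd)
      have eq1: "ti u = T ti - int l * q (p u)" if u: "u \<in> C" for u
      proof -
        have "a (p u) = 0" using pP[OF u] u0 a_def by auto
        then show ?thesis using hq[of "p u"] pP[OF u] Fp[OF u, of ti] by simp
      qed
      have eq2: "ti (p u) = T ti + a u - (\<Sum>w\<in>N u. ti w) - int l * q u" if u: "u \<in> C" for u
        using hq[of u] u CV Fu[OF u, of ti] by auto
      have eqN: "(\<Sum>w\<in>N u. ti w) = d u * T ti - int l * (\<Sum>w\<in>N u. q (p w))" for u
      proof -
        have "(\<Sum>w\<in>N u. ti w) = (\<Sum>w\<in>N u. T ti - int l * q (p w))"
          using eq1 NC by (intro sum.cong) auto
        also have "\<dots> = d u * T ti - int l * (\<Sum>w\<in>N u. q (p w))"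
          using sumN by (simp add: sum_distrib_left)
        finally show ?thesis .
      qed
      have sa: "(\<Sum>u\<in>C. a u) = 1" using u0 finC a_def by simp
      define Q where "Q = (\<Sum>u\<in>C. q (p u)) - (\<Sum>u\<in>C. \<Sum>w\<in>N u. q (p w)) + (\<Sum>u\<in>C. q u)"
      have s1: "(\<Sum>u\<in>C. ti u) = (\<Sum>u\<in>C. T ti - int l * q (p u))"
        by (rule sum.cong) (simp_all add: eq1)
      have s2: "(\<Sum>u\<in>C. ti (p u)) = (\<Sum>u\<in>C. T ti + a u - (d u * T ti - int l * (\<Sum>w\<in>N u. q (p w))) - int l * q u)"
      proof (rule sum.cong)
        fix u assume u: "u \<in> C"
        show "ti (p u) = T ti + a u - (d u * T ti - int l * (\<Sum>w\<in>N u. q (p w))) - int l * q u"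
          unfolding eq2[OF u] eqN ..
      qed simp
      have "T ti = (\<Sum>u\<in>C. T ti - int l * q (p u))
                 + (\<Sum>u\<in>C. T ti + a u - (d u * T ti - int l * (\<Sum>w\<in>N u. q (p w))) - int l * q u)"
        using Tform[of ti] s1 s2 by simp
      also have "\<dots> = 2 * int c * T ti + 1 - (\<Sum>u\<in>C. d u) * T ti - int l * Q"
        using sa c_def unfolding Q_def
        by (simp add: sum.distrib sum_subtractf sum_distrib_left sum_distrib_right algebra_simps)
      finally have eqT: "T ti = 2 * int c * T ti + 1 - (\<Sum>u\<in>C. d u) * T ti - int l * Q" .
      have DT: "D * T ti + 1 = int l * Q" unfolding D_eq using eqT by algebra
      have g1: "gcd D (int l) dvd D * T ti" by (rule dvd_mult2) simp
      have g2: "gcd D (int l) dvd int l * Q" by (rule dvd_mult2) simp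
      have "gcd D (int l) dvd int l * Q - D * T ti" using g1 g2 by (rule dvd_diff[rotated])
      moreover have "int l * Q - D * T ti = 1" using DT by simp
      ultimately have "gcd D (int l) dvd 1" by simp
      then show ?thesis by simp
    qed
  next
    assume gc: "gcd D (int l) = 1"
    obtain x y where xy: "x * D + y * int l = 1" using bezout_int[of D "int l"] gc by auto
    show "N_AW l V (compl_graph V E)"
      unfolding N_AW_def
    proof
      fix a :: "'a \<Rightarrow> int"
      define b where "b v = - a v" for v
      define R where "R = - (\<Sum>u\<in>C. b (p u)) - (\<Sum>u\<in>C. b u) + (\<Sum>u\<in>C. \<Sum>w\<in>N u. b (p w))"
      define T0 where "T0 = - R * x"
      define t1 where "t1 u = T0 - b (p u)" for u
      define t2 where "t2 u = T0 - b u - (\<Sum>w\<in>N u. t1 w)" for u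
      define ti where "ti v = (if v \<in> C then t1 v else t2 (inv_into C p v))" for v
      have tiC: "ti u = t1 u" if "u \<in> C" for u using that ti_def by simp
      have tip: "ti (p u) = t2 u" if "u \<in> C" for u using that ti_def pP inj by simp
      have sN: "(\<Sum>w\<in>N u. ti w) = (\<Sum>w\<in>N u. t1 w)" for u
        using NC tiC by (intro sum.cong) auto
      have sN1: "(\<Sum>w\<in>N u. t1 w) = d u * T0 - (\<Sum>w\<in>N u. b (p w))" for u
        unfolding t1_def by (rule sumN)
      have "T ti = (\<Sum>u\<in>C. t1 u) + (\<Sum>u\<in>C. t2 u)"
        unfolding Tform[of ti] using tiC tip by simp
      also have "\<dots> = (\<Sum>u\<in>C. T0 - b (p u)) + (\<Sum>u\<in>C. T0 - b u - (d u * T0 - (\<Sum>w\<in>N u. b (p w))))"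
        unfolding t2_def sN1 t1_def by simp
      also have "\<dots> = (2 * int c - (\<Sum>u\<in>C. d u)) * T0 + R"
        using c_def unfolding R_def
        by (simp add: sum.distrib sum_subtractf sum_distrib_left sum_distrib_right algebra_simps)
      finally have eqT: "T ti = (2 * int c - (\<Sum>u\<in>C. d u)) * T0 + R" .
      have "T ti - T0 = D * T0 + R" unfolding D_eq using eqT by algebra
      also have "\<dots> = int l * (R * y)" unfolding T0_def using xy
        by algebra
      finally have TT: "T ti - T0 = int l * (R * y)" .
      have dv: "int l dvd (a v + (\<Sum>w\<in>S v. ti w))" if v: "v \<in> V" for v
      proof (cases "v \<in> C")
        case True
        have "a v + (\<Sum>w\<in>S v. ti w) = T ti - T0"
          using Fu[OF True, of ti] tip[OF True] sN t2_def b_def by simp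
        then show ?thesis using TT by simp
      next
        case False
        then obtain u where u: "u \<in> C" "v = p u" using surj v by blast
        have "a v + (\<Sum>w\<in>S v. ti w) = T ti - T0"
          using Fp[OF u(1), of ti] tiC[OF u(1)] u(2) t1_def b_def by simp
        then show ?thesis using TT by simp
      qed
      define t where "t w = nat (ti w mod int l)" for w
      show "\<exists>t :: 'a \<Rightarrow> nat. \<forall>v\<in>V. (a v + (\<Sum>w\<in>{w\<in>V. w = v \<or> compl_graph V E w v}. int (t w))) mod int l = 0"
      proof (intro exI ballI)
        fix v assume v: "v \<in> V"
        have "(a v + (\<Sum>w\<in>S v. int (t w))) mod int l = (a v + (\<Sum>w\<in>S v. ti w mod int l)) mod int l"
          using l unfolding t_def by simp
        also have "\<dots> = (a v + (\<Sum>w\<in>S v. ti w mod int l) mod int l) mod int l"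
          by (simp add: mod_add_right_eq)
        also have "\<dots> = (a v + (\<Sum>w\<in>S v. ti w) mod int l) mod int l"
          by (simp add: mod_sum_eq)
        also have "\<dots> = (a v + (\<Sum>w\<in>S v. ti w)) mod int l"
          by (simp add: mod_add_right_eq)
        also have "\<dots> = 0" using dv[OF v] by simp
        finally show "(a v + (\<Sum>w\<in>{w\<in>V. w = v \<or> compl_graph V E w v}. int (t w))) mod int l = 0"
          unfolding S_def .
      qed
    qed
  qed
qed

theorem lemma3p10:
  fixes V :: "'a set" and E :: "'a \<Rightarrow> 'a \<Rightarrow> bool" and l :: nat
  assumes "is_graph V E" and "l \<ge> 2"
  shows "(is_pendant V E \<longrightarrow>
            (N_AW l V (compl_graph V E) \<longleftrightarrow>
             gcd (2 * (int (card V) - int (num_edges V E)) - 1) (int l) = 1))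
       \<and> (\<forall>k :: int. even (card V)
            \<and> int (num_edges V E) = int (card V choose 2) - (int (card V) div 2 + k)
            \<and> is_pendant V (compl_graph V E) \<longrightarrow>
            (N_AW l V E \<longleftrightarrow> gcd (int (card V) - 2 * k - 1) (int l) = 1))"
proof
  have l: "l > 0" using assms(2) by simp
  show "is_pendant V E \<longrightarrow>
            (N_AW l V (compl_graph V E) \<longleftrightarrow>
             gcd (2 * (int (card V) - int (num_edges V E)) - 1) (int l) = 1)"
  proof
    assume "is_pendant V E"
    then obtain C p where C: "C \<subseteq> V" "bij_betw p C (V - C)"
      "\<forall>u\<in>V - C. \<forall>v. E u v \<longleftrightarrow> (v \<in> C \<and> u = p v)"
      unfolding is_pendant_def by blast
    show "N_AW l V (compl_graph V E) \<longleftrightarrow>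
             gcd (2 * (int (card V) - int (num_edges V E)) - 1) (int l) = 1"
      by (rule part1[OF assms(1) l C])
  qed
  show "\<forall>k :: int. even (card V)
            \<and> int (num_edges V E) = int (card V choose 2) - (int (card V) div 2 + k)
            \<and> is_pendant V (compl_graph V E) \<longrightarrow>
            (N_AW l V E \<longleftrightarrow> gcd (int (card V) - 2 * k - 1) (int l) = 1)"
  proof (intro allI impI)
    fix k :: int
    assume h: "even (card V)
            \<and> int (num_edges V E) = int (card V choose 2) - (int (card V) div 2 + k)
            \<and> is_pendant V (compl_graph V E)"
    have g': "is_graph V (compl_graph V E)" by (rule compl_is_graph[OF assms(1)])
    obtain C p where C: "C \<subseteq> V" "bij_betw p C (V - C)"
      "\<forall>u\<in>V - C. \<forall>v. compl_graph V E u v \<longleftrightarrow> (v \<in> C \<and> u = p v)"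
      using h unfolding is_pendant_def by blast
    have P: "N_AW l V (compl_graph V (compl_graph V E)) \<longleftrightarrow>
        gcd (2 * (int (card V) - int (num_edges V (compl_graph V E))) - 1) (int l) = 1"
      by (rule part1[OF g' l C])
    have ec: "num_edges V E + num_edges V (compl_graph V E) = card V choose 2"
      by (rule edges_compl[OF assms(1)])
    have m': "int (num_edges V (compl_graph V E)) = int (card V) div 2 + k"
      using h ec by linarith
    have ev: "int (card V) = 2 * (int (card V) div 2)" using h by auto
    have eqx: "2 * (int (card V) - int (num_edges V (compl_graph V E))) - 1 = int (card V) - 2 * k - 1"
    proof -
      obtain q where q: "int (card V) div 2 = q" by blast
      then have "int (card V) = 2 * q" using ev by simp
      then show ?thesis unfolding m' q by simp
    qed
    show "N_AW l V E \<longleftrightarrow> gcd (int (card V) - 2 * k - 1) (int l) = 1"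
      using P[unfolded eqx compl_compl[OF assms(1)]] .
  qed
qed

end
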